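(* There is an absolute constant $c>0$ such that for all $n,k\ge1$ and every $k$-monotone sequence $S\in[n]^n$ (a sequence of length $n$ over keys $[n]$), ${\mathit LF}^k(S)\le c\,nk$.
   Context: A sequence $X=(x_1,\dots,x_m)$ contains a permutation pattern $\pi$ of length $k$ if there are indices $i_1<\dots<i_k$ with $x_{i_a}<x_{i_b}$ iff $\pi(a)<\pi(b)$; otherwise it avoids $\pi$. $X$ is $k$-monotone if it avoids $(1,2,\dots,k)$ or avoids $(k,k-1,\dots,1)$. For a BST $T$, $d_T(a,b)$ is the number of edges on the path between $a$ and $b$. $k$-lazy finger bound: fix a BST $T$ on $[n]$. A finger strategy consists of initial positions $\vec\ell\in[n]^k$ and a sequence $\vec f\in[k]^m$, where finger $f_t$ serves request $s_t$ and then sits at $s_t$; the other fingers stay where they are. With $\sigma(i,t)$ the position of finger $i$ just before time $t$ (and $\sigma(i,1)=\ell_i$), the cost is $\sum_{t=1}^m(1+d_T(s_t,\sigma(f_t,t)))$. Then ${\mathit LF}^k_T(S)$ is the minimum over strategies, and ${\mathit LF}^k(S)=\min_T{\mathit LF}^k_T(S)$ over BSTs $T$ on $[n]$. *)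

theory Defs
  imports Complex_Main "HOL-Library.Tree"
begin

text \<open>Sequences are lists (position a of the paper is list index a-1).\<close>

definition contains_pattern :: "nat list \<Rightarrow> nat list \<Rightarrow> bool" where
  "contains_pattern X pat \<longleftrightarrow>
     (\<exists>i :: nat \<Rightarrow> nat.
        (\<forall>a b. a < b \<and> b < length pat \<longrightarrow> i a < i b) \<and>
        (\<forall>a < length pat. i a < length X) \<and>
        (\<forall>a < length pat. \<forall>b < length pat. (X ! i a < X ! i b \<longleftrightarrow> pat ! a < pat ! b)))"

definition avoids_pattern :: "nat list \<Rightarrow> nat list \<Rightarrow> bool" where
  "avoids_pattern X pat \<longleftrightarrow> \<not> contains_pattern X pat"

definition k_monotone :: "nat \<Rightarrow> nat list \<Rightarrow> bool" where
  "k_monotone k X \<longleftrightarrow>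
     avoids_pattern X [1..<k+1] \<or> avoids_pattern X (rev [1..<k+1])"

definition bst_on :: "nat \<Rightarrow> nat tree \<Rightarrow> bool" where
  "bst_on n T \<longleftrightarrow> inorder T = [1..<n+1]"

fun root_path :: "nat tree \<Rightarrow> nat \<Rightarrow> nat list" where
  "root_path Leaf x = []"
| "root_path (Node l a r) x =
     a # (if x < a then root_path l x else if a < x then root_path r x else [])"

fun common_prefix_len :: "nat list \<Rightarrow> nat list \<Rightarrow> nat" where
  "common_prefix_len (x # xs) (y # ys) = (if x = y then Suc (common_prefix_len xs ys) else 0)"
| "common_prefix_len _ _ = 0"

text \<open>Number of edges on the tree path between keys a and b:
  depth a + depth b - 2 depth(lca a b).\<close>
definition tree_dist :: "nat tree \<Rightarrow> nat \<Rightarrow> nat \<Rightarrow> nat" where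
  "tree_dist T a b =
     length (root_path T a) + length (root_path T b)
       - 2 * common_prefix_len (root_path T a) (root_path T b)"

fun finger_cost :: "nat tree \<Rightarrow> (nat \<Rightarrow> nat) \<Rightarrow> nat list \<Rightarrow> nat list \<Rightarrow> nat" where
  "finger_cost T pos (s # ss) (f # fs) =
     1 + tree_dist T s (pos f) + finger_cost T (pos(f := s)) ss fs"
| "finger_cost T pos _ _ = 0"

definition LF_T :: "nat \<Rightarrow> nat \<Rightarrow> nat tree \<Rightarrow> nat list \<Rightarrow> nat" where
  "LF_T k n T S = Inf {finger_cost T l S fs | l fs.
       (\<forall>i \<in> {1..k}. l i \<in> {1..n}) \<and> length fs = length S \<and> set fs \<subseteq> {1..k}}"

definition LF :: "nat \<Rightarrow> nat \<Rightarrow> nat list \<Rightarrow> nat" where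
  "LF k n S = Inf {LF_T k n T S | T. bst_on n T}"

end

theory Submission
  imports Defs
begin

fun rt :: "nat \<Rightarrow> nat \<Rightarrow> nat tree" where
  "rt a 0 = Leaf"
| "rt a (Suc m) = Node Leaf a (rt (Suc a) m)"

lemma inorder_rt: "inorder (rt a m) = [a..<a+m]"
  by (induction m arbitrary: a) (auto simp: upt_rec)

lemma cpl_nil: "common_prefix_len xs [] = 0"
  by (cases xs) auto

lemma len_rp: "a \<le> x \<Longrightarrow> x < a + m \<Longrightarrow> length (root_path (rt a m) x) = x + 1 - a"
proof (induction m arbitrary: a)
  case 0 then show ?case by simp
next
  case (Suc m) then show ?case by auto
qed

lemma cpl_rp: "a \<le> x \<Longrightarrow> x < a + m \<Longrightarrow> a \<le> y \<Longrightarrow> y < a + m \<Longrightarrow>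
   common_prefix_len (root_path (rt a m) x) (root_path (rt a m) y) = min x y + 1 - a"
proof (induction m arbitrary: a)
  case 0 then show ?case by simp
next
  case (Suc m)
  show ?case
  proof (cases "x = a \<or> y = a")
    case True then show ?thesis using Suc.prems by (auto simp: cpl_nil)
  next
    case False
    then have "a < x" "a < y" using Suc.prems by auto
    then show ?thesis using Suc.IH[of "Suc a"] Suc.prems by auto
  qed
qed

lemma dist_rt: "1 \<le> x \<Longrightarrow> x \<le> n \<Longrightarrow> 1 \<le> y \<Longrightarrow> y \<le> n \<Longrightarrow>
   int (tree_dist (rt 1 n) x y) = \<bar>int x - int y\<bar>"
  unfolding tree_dist_def
  using len_rp[of 1 x n] len_rp[of 1 y n] cpl_rp[of 1 x n y] by auto

lemma sum_upd:
  assumes "finite K" "f \<in> K"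
  shows "(\<Sum>i\<in>K. (\<phi>::nat\<Rightarrow>int) ((pos(f := s)) i)) = (\<Sum>i\<in>K. \<phi> (pos i)) - \<phi> (pos f) + \<phi> s"
proof -
  have "(\<Sum>i\<in>K. \<phi> ((pos(f := s)) i)) = \<phi> s + (\<Sum>i\<in>K - {f}. \<phi> ((pos(f := s)) i))"
    using assms by (simp add: sum.remove)
  also have "(\<Sum>i\<in>K - {f}. \<phi> ((pos(f := s)) i)) = (\<Sum>i\<in>K - {f}. \<phi> (pos i))"
    by (rule sum.cong) auto
  also have "\<dots> = (\<Sum>i\<in>K. \<phi> (pos i)) - \<phi> (pos f)"
    using assms by (simp add: sum.remove)
  finally show ?thesis by simp
qed

lemma cost_gen:
  assumes D: "\<And>x y. x \<in> A \<Longrightarrow> y \<in> A \<Longrightarrow> le y x \<Longrightarrow> int (tree_dist T x y) \<le> \<phi> y - \<phi> x"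
    and nn: "\<And>x. x \<in> A \<Longrightarrow> \<phi> x \<ge> 0" and fK: "finite K"
  shows "length fs = length ss \<Longrightarrow> set fs \<subseteq> K \<Longrightarrow> (\<forall>i\<in>K. pos i \<in> A) \<Longrightarrow> set ss \<subseteq> A \<Longrightarrow>
    (\<forall>j<length ss. le (pos (fs!j)) (ss!j)) \<Longrightarrow>
    (\<forall>i j. i < j \<longrightarrow> j < length ss \<longrightarrow> fs!i = fs!j \<longrightarrow> le (ss!i) (ss!j)) \<Longrightarrow>
    int (finger_cost T pos ss fs) \<le> int (length ss) + (\<Sum>i\<in>K. \<phi> (pos i))"
proof (induction ss arbitrary: pos fs)
  case Nil
  have "(\<Sum>i\<in>K. \<phi> (pos i)) \<ge> 0" using Nil nn by (intro sum_nonneg) auto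
  then show ?case by simp
next
  case (Cons s ss)
  obtain f fs' where fs: "fs = f # fs'" using Cons.prems(1) by (cases fs) auto
  have fK': "f \<in> K" using Cons.prems(2) fs by auto
  have pfA: "pos f \<in> A" using Cons.prems(3) fK' by auto
  have sA: "s \<in> A" using Cons.prems(4) by auto
  have le0: "le (pos f) s" using Cons.prems(5) fs by force
  let ?p = "pos(f := s)"
  have IH: "int (finger_cost T ?p ss fs') \<le> int (length ss) + (\<Sum>i\<in>K. \<phi> (?p i))"
  proof (rule Cons.IH)
    show "length fs' = length ss" using Cons.prems(1) fs by simp
    show "set fs' \<subseteq> K" using Cons.prems(2) fs by simp
    show "\<forall>i\<in>K. ?p i \<in> A" using Cons.prems(3) sA by auto
    show "set ss \<subseteq> A" using Cons.prems(4) by simp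
    show "\<forall>j<length ss. le (?p (fs'!j)) (ss!j)"
    proof (intro allI impI)
      fix j assume j: "j < length ss"
      show "le (?p (fs'!j)) (ss!j)"
      proof (cases "fs'!j = f")
        case True
        then have "le ((s#ss)!0) ((s#ss)!(Suc j))"
          using Cons.prems(6) j fs by (metis Suc_mono length_Cons nth_Cons_0 nth_Cons_Suc zero_less_Suc)
        then show ?thesis using True by simp
      next
        case False
        then show ?thesis using Cons.prems(5) j fs by (metis Suc_mono fun_upd_other length_Cons nth_Cons_Suc)
      qed
    qed
    show "\<forall>i j. i < j \<longrightarrow> j < length ss \<longrightarrow> fs'!i = fs'!j \<longrightarrow> le (ss!i) (ss!j)"
    proof (intro allI impI)
      fix i j assume "i < j" "j < length ss" "fs'!i = fs'!j"
      then have "le ((s#ss)!Suc i) ((s#ss)!Suc j)" using Cons.prems(6) fs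
        by (metis Suc_mono length_Cons nth_Cons_Suc)
      then show "le (ss!i) (ss!j)" by simp
    qed
  qed
  have "int (finger_cost T pos (s#ss) fs) = 1 + int (tree_dist T s (pos f)) + int (finger_cost T ?p ss fs')"
    using fs by simp
  also have "\<dots> \<le> 1 + (\<phi> (pos f) - \<phi> s) + (int (length ss) + (\<Sum>i\<in>K. \<phi> (?p i)))"
    using D[OF sA pfA le0] IH by linarith
  also have "\<dots> = int (length (s#ss)) + (\<Sum>i\<in>K. \<phi> (pos i))"
    using sum_upd[OF fK fK', of \<phi> pos s] by simp
  finally show ?case .
qed

definition chain :: "(nat \<Rightarrow> nat \<Rightarrow> bool) \<Rightarrow> nat list \<Rightarrow> nat \<Rightarrow> (nat \<Rightarrow> nat) \<Rightarrow> bool" where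
  "chain R X m idx \<longleftrightarrow> (\<forall>a b. a < b \<and> b < m \<longrightarrow> idx a < idx b \<and> R (X ! idx a) (X ! idx b))
     \<and> (\<forall>a<m. idx a < length X)"

definition lab :: "(nat \<Rightarrow> nat \<Rightarrow> bool) \<Rightarrow> nat list \<Rightarrow> nat \<Rightarrow> nat" where
  "lab R X j = Max {m. \<exists>idx. m > 0 \<and> idx (m - 1) = j \<and> chain R X m idx}"

lemma chain_ge: "chain R X m idx \<Longrightarrow> a < m \<Longrightarrow> a \<le> idx a"
proof (induction a)
  case 0 then show ?case by simp
next
  case (Suc a)
  then have "idx a < idx (Suc a)" unfolding chain_def by auto
  then show ?case using Suc by auto
qed

lemma lab_set_fin: "finite {m. \<exists>idx. m > 0 \<and> idx (m - 1) = j \<and> chain R X m idx}"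
proof (rule finite_subset[of _ "{..Suc j}"])
  show "{m. \<exists>idx. m > 0 \<and> idx (m - 1) = j \<and> chain R X m idx} \<subseteq> {..Suc j}"
  proof
    fix m assume "m \<in> {m. \<exists>idx. m > 0 \<and> idx (m - 1) = j \<and> chain R X m idx}"
    then obtain idx where "m > 0" "idx (m - 1) = j" "chain R X m idx" by auto
    then have "m - 1 \<le> j" using chain_ge[of R X m idx "m-1"] by auto
    then show "m \<in> {..Suc j}" by auto
  qed
qed auto

lemma lab_ge1: "j < length X \<Longrightarrow> lab R X j \<ge> 1"
proof -
  assume j: "j < length X"
  have "chain R X 1 (\<lambda>_. j)" using j unfolding chain_def by auto
  then have "1 \<in> {m. \<exists>idx. m > 0 \<and> idx (m - 1) = j \<and> chain R X m idx}" by auto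
  then show ?thesis unfolding lab_def using lab_set_fin by (meson Max_ge)
qed

lemma lab_ex: "j < length X \<Longrightarrow> \<exists>idx. lab R X j > 0 \<and> idx (lab R X j - 1) = j \<and> chain R X (lab R X j) idx"
proof -
  assume j: "j < length X"
  have "chain R X 1 (\<lambda>_. j)" using j unfolding chain_def by auto
  then have "{m. \<exists>idx. m > 0 \<and> idx (m - 1) = j \<and> chain R X m idx} \<noteq> {}" by auto
  from Max_in[OF lab_set_fin this] show ?thesis unfolding lab_def by auto
qed

lemma lab_le: "j < length X \<Longrightarrow> (\<forall>idx. \<not> chain R X k idx) \<Longrightarrow> lab R X j < k"
proof (rule ccontr)
  assume j: "j < length X" and nc: "\<forall>idx. \<not> chain R X k idx" and "\<not> lab R X j < k"
  then have kl: "k \<le> lab R X j" by simp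
  obtain idx where "chain R X (lab R X j) idx" using lab_ex[OF j] by blast
  then have "chain R X k idx" using kl unfolding chain_def by auto
  then show False using nc by blast
qed

lemma lab_ext:
  assumes tr: "\<And>x y z. R x y \<Longrightarrow> R y z \<Longrightarrow> R x z"
    and ij: "i < j" "j < length X" and r: "R (X!i) (X!j)"
  shows "lab R X j \<ge> lab R X i + 1"
proof -
  have il: "i < length X" using ij by simp
  obtain idx where p: "lab R X i > 0" "idx (lab R X i - 1) = i" "chain R X (lab R X i) idx"
    using lab_ex[OF il] by blast
  let ?m = "lab R X i"
  define idx' where "idx' = idx(?m := j)"
  have "chain R X (?m + 1) idx'"
    unfolding chain_def
  proof (rule conjI; intro allI impI)
    fix a b assume ab: "a < b \<and> b < ?m + 1"
    show "idx' a < idx' b \<and> R (X ! idx' a) (X ! idx' b)"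
    proof (cases "b = ?m")
      case True
      then have a: "a < ?m" using ab by simp
      show ?thesis
      proof (cases "a = ?m - 1")
        case True
        then show ?thesis using a p(2) ij r \<open>b = ?m\<close> unfolding idx'_def by auto
      next
        case False
        then have "a < ?m - 1" using a by simp
        then have "idx a < idx (?m - 1) \<and> R (X ! idx a) (X ! idx (?m - 1))"
          using p(3) a unfolding chain_def by auto
        then show ?thesis using a p(2) ij r \<open>b = ?m\<close> tr unfolding idx'_def by auto
      qed
    next
      case False
      then show ?thesis using ab p(3) unfolding chain_def idx'_def by auto
    qed
  next
    fix a assume "a < ?m + 1"
    then show "idx' a < length X" using p(3) ij unfolding chain_def idx'_def by auto
  qed
  moreover have "idx' (?m + 1 - 1) = j" unfolding idx'_def by simp
  ultimately have "\<exists>idx. ?m + 1 > 0 \<and> idx (?m + 1 - 1) = j \<and> chain R X (?m + 1) idx" by (intro exI[of _ idx'] conjI) auto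
  then have "?m + 1 \<in> {m. \<exists>idx. m > 0 \<and> idx (m - 1) = j \<and> chain R X m idx}" by (simp only: mem_Collect_eq)
  then show ?thesis unfolding lab_def using lab_set_fin by (meson Max_ge)
qed

lemma no_chain_dec: "avoids_pattern X (rev [1..<k+1]) \<Longrightarrow> \<not> chain (>) X k idx"
proof
  assume av: "avoids_pattern X (rev [1..<k+1])" and c: "chain (>) X k idx"
  have "contains_pattern X (rev [1..<k+1])"
    unfolding contains_pattern_def
  proof (rule exI[of _ idx], intro conjI allI impI)
    fix a b assume "a < b \<and> b < length (rev [1..<k+1])"
    moreover have "length (rev [1..<k+1]) = k" by simp
    ultimately show "idx a < idx b" using c unfolding chain_def by metis
  next
    fix a assume "a < length (rev [1..<k+1])"
    moreover have "length (rev [1..<k+1]) = k" by simp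
    ultimately show "idx a < length X" using c unfolding chain_def by metis
  next
    fix a b assume a: "a < length (rev [1..<k+1])" and b: "b < length (rev [1..<k+1])"
    have ra: "rev [1..<k+1] ! a = k - a" using a by (simp add: rev_nth del: upt_Suc)
    have rb: "rev [1..<k+1] ! b = k - b" using b by (simp add: rev_nth del: upt_Suc)
    show "(X ! idx a < X ! idx b) = (rev [1..<k + 1] ! a < rev [1..<k + 1] ! b)"
    proof (cases a b rule: linorder_cases)
      case less
      have kk: "length (rev [1..<k+1]) = k" by simp
      have "X ! idx b < X ! idx a" using c less b kk unfolding chain_def by metis
      then show ?thesis using less a b ra rb kk by (auto simp del: upt_Suc)
    next
      case equal then show ?thesis by simp
    next
      case greater then show ?thesis using c a b ra rb unfolding chain_def by (auto simp del: upt_Suc)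
    qed
  qed
  then show False using av unfolding avoids_pattern_def by simp
qed

lemma no_chain_inc: "avoids_pattern X [1..<k+1] \<Longrightarrow> \<not> chain (<) X k idx"
proof
  assume av: "avoids_pattern X [1..<k+1]" and c: "chain (<) X k idx"
  have "contains_pattern X [1..<k+1]"
    unfolding contains_pattern_def
  proof (rule exI[of _ idx], intro conjI allI impI)
    fix a b assume "a < b \<and> b < length [1..<k+1]"
    moreover have "length [1..<k+1] = k" by simp
    ultimately show "idx a < idx b" using c unfolding chain_def by metis
  next
    fix a assume "a < length [1..<k+1]"
    moreover have "length [1..<k+1] = k" by simp
    ultimately show "idx a < length X" using c unfolding chain_def by metis
  next
    fix a b assume a: "a < length [1..<k+1]" and b: "b < length [1..<k+1]"
    show "(X ! idx a < X ! idx b) = ([1..<k + 1] ! a < [1..<k + 1] ! b)"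
    proof (cases a b rule: linorder_cases)
      case less then show ?thesis using c a b unfolding chain_def by (auto simp del: upt_Suc)
    next
      case equal then show ?thesis by simp
    next
      case greater then show ?thesis using c a b unfolding chain_def by (fastforce simp del: upt_Suc)
    qed
  qed
  then show False using av unfolding avoids_pattern_def by simp
qed

lemma LF_le:
  assumes "bst_on n T" "\<forall>i \<in> {1..k}. l i \<in> {1..n}" "length fs = length S" "set fs \<subseteq> {1..k}"
  shows "LF k n S \<le> finger_cost T l S fs"
proof -
  have "LF_T k n T S \<le> finger_cost T l S fs"
    unfolding LF_T_def using assms by (intro cInf_lower) auto
  moreover have "LF k n S \<le> LF_T k n T S"
    unfolding LF_def using assms by (intro cInf_lower) auto
  ultimately show ?thesis by simp
qed

lemma bst_rt: "bst_on n (rt 1 n)"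
  unfolding bst_on_def inorder_rt by simp

theorem mainTheorem5:
  shows "\<exists>c::real. c > 0 \<and>
    (\<forall>n k :: nat. \<forall>S :: nat list.
       n \<ge> 1 \<longrightarrow> k \<ge> 1 \<longrightarrow> length S = n \<longrightarrow> set S \<subseteq> {1..n} \<longrightarrow> k_monotone k S \<longrightarrow>
       real (LF k n S) \<le> c * real n * real k)"
proof (rule exI[of _ 2], intro conjI allI impI)
  fix n k :: nat and S :: "nat list"
  assume n: "n \<ge> 1" and k: "k \<ge> 1" and len: "length S = n" and sS: "set S \<subseteq> {1..n}"
    and km: "k_monotone k S"
  let ?T = "rt 1 n"
  have bound: "int (LF k n S) \<le> int n + int k * (int n - 1)"
  proof (cases "avoids_pattern S [1..<k+1]")
    case True
    define fs where "fs = map (lab (<) S) [0..<n]"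
    have nc: "\<forall>idx. \<not> chain (<) S k idx" using no_chain_inc[OF True] by blast
    have fsK: "set fs \<subseteq> {1..k}" unfolding fs_def using lab_ge1 lab_le[OF _ nc] len
      by (auto simp: less_imp_le)
    have lf: "length fs = length S" unfolding fs_def using len by simp
    have "int (finger_cost ?T (\<lambda>_. n) S fs) \<le> int (length S) + (\<Sum>i\<in>{1..k}. int ((\<lambda>_. n) i) - 1)"
    proof (rule cost_gen[where le = "(\<ge>)" and A = "{1..n}"])
      fix x y assume "x \<in> {1..n}" "y \<in> {1..n}" "x \<le> y"
      then show "int (tree_dist ?T x y) \<le> (int y - 1) - (int x - 1)" using dist_rt[of x n y] by auto
    next
      show "\<forall>j<length S. (\<lambda>_. n) (fs!j) \<ge> S!j" using sS nth_mem by fastforce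
    next
      show "\<forall>i j. i < j \<longrightarrow> j < length S \<longrightarrow> fs!i = fs!j \<longrightarrow> S!i \<ge> S!j"
      proof (intro allI impI)
        fix i j assume ij: "i < j" "j < length S" "fs!i = fs!j"
        then have "lab (<) S i = lab (<) S j" unfolding fs_def using len by simp
        then show "S!i \<ge> S!j" using lab_ext[of "(<)" i j S] ij by fastforce
      qed
    qed (use n lf fsK sS in auto)
    moreover have "LF k n S \<le> finger_cost ?T (\<lambda>_. n) S fs"
      using LF_le[OF bst_rt _ lf fsK] n by auto
    ultimately show ?thesis using len by simp
  next
    case False
    then have av: "avoids_pattern S (rev [1..<k+1])" using km unfolding k_monotone_def by simp
    define fs where "fs = map (lab (>) S) [0..<n]"
    have nc: "\<forall>idx. \<not> chain (>) S k idx" using no_chain_dec[OF av] by blast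
    have fsK: "set fs \<subseteq> {1..k}" unfolding fs_def using lab_ge1 lab_le[OF _ nc] len
      by (auto simp: less_imp_le)
    have lf: "length fs = length S" unfolding fs_def using len by simp
    have "int (finger_cost ?T (\<lambda>_. 1) S fs) \<le> int (length S) + (\<Sum>i\<in>{1..k}. int n - int ((\<lambda>_. 1) i))"
    proof (rule cost_gen[where le = "(\<le>)" and A = "{1..n}"])
      fix x y assume "x \<in> {1..n}" "y \<in> {1..n}" "y \<le> x"
      then show "int (tree_dist ?T x y) \<le> (int n - int y) - (int n - int x)" using dist_rt[of x n y] by auto
    next
      show "\<forall>j<length S. (\<lambda>_. 1) (fs!j) \<le> S!j" using sS nth_mem by fastforce
    next
      show "\<forall>i j. i < j \<longrightarrow> j < length S \<longrightarrow> fs!i = fs!j \<longrightarrow> S!i \<le> S!j"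
      proof (intro allI impI)
        fix i j assume ij: "i < j" "j < length S" "fs!i = fs!j"
        then have "lab (>) S i = lab (>) S j" unfolding fs_def using len by simp
        then show "S!i \<le> S!j" using lab_ext[of "(>)" i j S] ij by fastforce
      qed
    qed (use n lf fsK sS in auto)
    moreover have "LF k n S \<le> finger_cost ?T (\<lambda>_. 1) S fs"
      using LF_le[OF bst_rt _ lf fsK] n by auto
    ultimately show ?thesis using len by simp
  qed
  have "real (LF k n S) \<le> real n + real k * (real n - 1)"
  proof -
    have "real_of_int (int (LF k n S)) \<le> real_of_int (int n + int k * (int n - 1))"
      using bound by linarith
    then show ?thesis by simp
  qed
  also have "\<dots> \<le> 2 * real n * real k"
  proof -
    have "real n \<le> real n * real k" using k n by simp
    then show ?thesis by (simp add: algebra_simps)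
  qed
  finally show "real (LF k n S) \<le> 2 * real n * real k" .
qed simp

end
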